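(* Let $\boldsymbol{x}\in\mathbb{T}^3$ and $\boldsymbol{v}\in\mathbb{S}^2$, and for $\underline{\omega}=(\omega_1,\omega_2,\dots)$ with $\omega_i\in\Omega_0$ define $\boldsymbol{x}_0=\boldsymbol{x}$, $\boldsymbol{v}_0=\boldsymbol{v}$ and recursively $\boldsymbol{x}_n=f_{\omega_n}(\boldsymbol{x}_{n-1})$, $\boldsymbol{v}_n=\dfrac{D_{\boldsymbol{x}_{n-1}}f_{\omega_n}\boldsymbol{v}_{n-1}}{|D_{\boldsymbol{x}_{n-1}}f_{\omega_n}\boldsymbol{v}_{n-1}|}$. Then: (1) there exist $N_1\in\mathbb{N}$ and $(\omega_1,\dots,\omega_{N_1})\in\Omega_0^{N_1}$ such that $\boldsymbol{v}_{N_1}=(1,0,0)$; (2) if $\boldsymbol{v}=(1,0,0)$, then for any $\overline{\boldsymbol{v}}\in\mathbb{S}^2$ there exist $N_2\in\mathbb{N}$ and $(\omega_1,\dots,\omega_{N_2})\in\Omega_0^{N_2}$ such that $\boldsymbol{v}_{N_2}=\overline{\boldsymbol{v}}$.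
   Context: $\mathbb{T}^3=\mathbb{R}^3/(2\pi\mathbb{Z})^3$ with points $\boldsymbol{x}=(x,y,z)$; $\mathbb{S}^2$ is the unit sphere in $\mathbb{R}^3$. Fix $U>0$ and let $\Omega_0=[-U,U]^3\times[0,2\pi)^3$, with elements $\omega=(\mathsf{A},\mathsf{B},\mathsf{C},\alpha,\beta,\gamma)$. Define maps of $\mathbb{T}^3$: $f_{(\mathsf{A},\alpha)}(x,y,z)=(x+\mathsf{A}\sin(z+\alpha),\ y+\mathsf{A}\cos(z+\alpha),\ z)$, $f_{(\mathsf{B},\beta)}(x,y,z)=(x,\ y+\mathsf{B}\sin(x+\beta),\ z+\mathsf{B}\cos(x+\beta))$, $f_{(\mathsf{C},\gamma)}(x,y,z)=(x+\mathsf{C}\cos(y+\gamma),\ y,\ z+\mathsf{C}\sin(y+\gamma))$, and $f_\omega=f_{(\mathsf{C},\gamma)}\circ f_{(\mathsf{B},\beta)}\circ f_{(\mathsf{A},\alpha)}$; $D_{\boldsymbol{x}}f_\omega$ is the Jacobian matrix of $f_\omega$ at $\boldsymbol{x}$. *)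

theory Defs
  imports "HOL-Analysis.Analysis"
begin

text \<open>Points of the torus are represented by lifts in real^3 (coordinates x,y,z = p$1,p$2,p$3).
  Parameters omega = (A,B,C,alpha,beta,gamma).\<close>

type_synonym omega = "real \<times> real \<times> real \<times> real \<times> real \<times> real"

definition Omega0 :: "real \<Rightarrow> omega set" where
  "Omega0 U = {-U..U} \<times> {-U..U} \<times> {-U..U} \<times> {0..<2*pi} \<times> {0..<2*pi} \<times> {0..<2*pi}"

definition fA :: "real \<Rightarrow> real \<Rightarrow> real^3 \<Rightarrow> real^3" where
  "fA A \<alpha> p = vector [p$1 + A * sin (p$3 + \<alpha>), p$2 + A * cos (p$3 + \<alpha>), p$3]"

definition fB :: "real \<Rightarrow> real \<Rightarrow> real^3 \<Rightarrow> real^3" where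
  "fB B \<beta> p = vector [p$1, p$2 + B * sin (p$1 + \<beta>), p$3 + B * cos (p$1 + \<beta>)]"

definition fC :: "real \<Rightarrow> real \<Rightarrow> real^3 \<Rightarrow> real^3" where
  "fC C \<gamma> p = vector [p$1 + C * cos (p$2 + \<gamma>), p$2, p$3 + C * sin (p$2 + \<gamma>)]"

definition f_omega :: "omega \<Rightarrow> real^3 \<Rightarrow> real^3" where
  "f_omega w = (case w of (A, B, C, \<alpha>, \<beta>, \<gamma>) \<Rightarrow> fC C \<gamma> \<circ> fB B \<beta> \<circ> fA A \<alpha>)"

fun orbit :: "omega list \<Rightarrow> real^3 \<Rightarrow> real^3 \<Rightarrow> (real^3) \<times> (real^3)" where
  "orbit [] x v = (x, v)"
| "orbit (w # ws) x v =
     (let u = frechet_derivative (f_omega w) (at x) v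
      in orbit ws (f_omega w x) ((1 / norm u) *\<^sub>R u))"

end

theory Submission
  imports Defs
begin

lemma vec3_eq: "(u::real^3) = w \<longleftrightarrow> u$1 = w$1 \<and> u$2 = w$2 \<and> u$3 = w$3"
  by (auto simp: vec_eq_iff forall_3)

lemma nth_deriv: "((\<lambda>p::real^3. p$i) has_derivative (\<lambda>h. h$i)) F"
  using bounded_linear_vec_nth bounded_linear_imp_has_derivative by blast

lemma fA_eq: "fA A \<alpha> = (\<lambda>p. p + (A * sin (p$3 + \<alpha>)) *\<^sub>R vector [1,0,0] + (A * cos (p$3 + \<alpha>)) *\<^sub>R vector [0,1,0])"
  by (rule ext) (simp add: fA_def vec3_eq vector_3)

lemma fB_eq: "fB B \<beta> = (\<lambda>p. p + (B * sin (p$1 + \<beta>)) *\<^sub>R vector [0,1,0] + (B * cos (p$1 + \<beta>)) *\<^sub>R vector [0,0,1])"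
  by (rule ext) (simp add: fB_def vec3_eq vector_3)

lemma fC_eq: "fC C \<gamma> = (\<lambda>p. p + (C * cos (p$2 + \<gamma>)) *\<^sub>R vector [1,0,0] + (C * sin (p$2 + \<gamma>)) *\<^sub>R vector [0,0,1])"
  by (rule ext) (simp add: fC_def vec3_eq vector_3)

lemma fA_deriv: "(fA A \<alpha> has_derivative (\<lambda>h. vector [h$1 + A * cos (x$3 + \<alpha>) * h$3,
      h$2 + (- (A * sin (x$3 + \<alpha>))) * h$3, h$3])) (at x)"
  unfolding fA_eq
  apply (rule derivative_eq_intros nth_deriv refl)+
  apply (rule ext) apply (simp add: vec3_eq vector_3 algebra_simps)
  done

lemma fB_deriv: "(fB B \<beta> has_derivative (\<lambda>h. vector [h$1, h$2 + B * cos (x$1 + \<beta>) * h$1,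
      h$3 + (- (B * sin (x$1 + \<beta>))) * h$1])) (at x)"
  unfolding fB_eq
  apply (rule derivative_eq_intros nth_deriv refl)+
  apply (rule ext) apply (simp add: vec3_eq vector_3 algebra_simps)
  done

lemma fC_deriv: "(fC C \<gamma> has_derivative (\<lambda>h. vector [h$1 + (- (C * sin (x$2 + \<gamma>))) * h$2, h$2,
      h$3 + C * cos (x$2 + \<gamma>) * h$2])) (at x)"
  unfolding fC_eq
  apply (rule derivative_eq_intros nth_deriv refl)+
  apply (rule ext) apply (simp add: vec3_eq vector_3 algebra_simps)
  done

lemma fA0: "fA 0 a = id" by (rule ext) (simp add: fA_def vec3_eq vector_3)
lemma fB0: "fB 0 a = id" by (rule ext) (simp add: fB_def vec3_eq vector_3)
lemma fC0: "fC 0 a = id" by (rule ext) (simp add: fC_def vec3_eq vector_3)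

lemma angle:
  assumes "p^2 + q^2 \<le> U^2" "U > 0"
  shows "\<exists>A \<alpha>. -U \<le> A \<and> A \<le> U \<and> 0 \<le> \<alpha> \<and> \<alpha> < 2*pi \<and> A * cos (z + \<alpha>) = p \<and> A * sin (z + \<alpha>) = q"
proof (cases "p^2 + q^2 = 0")
  case True
  then have "p = 0" "q = 0" by (simp_all add: sum_power2_eq_zero_iff)
  then show ?thesis using assms by (intro exI[of _ 0] exI[of _ 0]) auto
next
  case False
  define r where "r = sqrt (p^2 + q^2)"
  have rpos: "r > 0" using False unfolding r_def
    by (metis add_nonneg_nonneg real_sqrt_gt_zero zero_le_power2 order_le_less)
  have rU: "r \<le> U" unfolding r_def using assms
    by (metis abs_of_pos real_sqrt_abs real_sqrt_le_mono)
  have r2: "r^2 = p^2 + q^2" unfolding r_def by simp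
  have "(p/r)^2 + (q/r)^2 = 1" using rpos r2 False by (simp add: power_divide add_divide_distrib[symmetric])
  then obtain t where t: "0 \<le> t" "t < 2*pi" "p/r = cos t" "q/r = sin t"
    by (rule sincos_total_2pi)
  define k where "k = floor ((t - z) / (2*pi))"
  define \<alpha> where "\<alpha> = t - z - 2*pi * of_int k"
  have k1: "of_int k \<le> (t - z) / (2*pi)" "(t - z) / (2*pi) < of_int k + 1"
    unfolding k_def by linarith+
  have a0: "0 \<le> \<alpha>" using k1(1) pi_gt_zero unfolding \<alpha>_def by (simp add: field_simps)
  have a1: "\<alpha> < 2*pi" using k1(2) pi_gt_zero unfolding \<alpha>_def by (simp add: field_simps)
  have za: "z + \<alpha> = t + (2*pi) * of_int (-k)" unfolding \<alpha>_def by simp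
  have "cos (z + \<alpha>) = cos t" unfolding za cos_add by simp
  moreover have "sin (z + \<alpha>) = sin t" unfolding za sin_add by simp
  ultimately show ?thesis using t rpos rU assms a0 a1
    by (intro exI[of _ r] exI[of _ \<alpha>]) (auto simp: field_simps)
qed

definition nrm :: "real^3 \<Rightarrow> real^3" where "nrm u = (1 / norm u) *\<^sub>R u"
definition shA :: "real \<Rightarrow> real \<Rightarrow> real^3 \<Rightarrow> real^3" where
  "shA a b u = vector [u$1 + a*u$3, u$2 + b*u$3, u$3]"
definition shB :: "real \<Rightarrow> real \<Rightarrow> real^3 \<Rightarrow> real^3" where
  "shB a b u = vector [u$1, u$2 + a*u$1, u$3 + b*u$1]"
definition shC :: "real \<Rightarrow> real \<Rightarrow> real^3 \<Rightarrow> real^3" where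
  "shC a b u = vector [u$1 + a*u$2, u$2, u$3 + b*u$2]"

definition reach :: "real \<Rightarrow> real^3 \<Rightarrow> real^3 \<Rightarrow> bool" where
  "reach U u w \<longleftrightarrow> (\<forall>x. \<exists>ws. set ws \<subseteq> Omega0 U \<and> snd (orbit ws x u) = w)"

lemma orbit_append: "orbit (ws1 @ ws2) x v = (let p = orbit ws1 x v in orbit ws2 (fst p) (snd p))"
  by (induction ws1 arbitrary: x v) (simp_all add: Let_def)

lemma reach_trans: assumes "reach U u v" "reach U v w" shows "reach U u w"
  unfolding reach_def
proof
  fix x
  obtain ws1 where 1: "set ws1 \<subseteq> Omega0 U" "snd (orbit ws1 x u) = v"
    using assms(1) unfolding reach_def by blast
  obtain ws2 where 2: "set ws2 \<subseteq> Omega0 U" "snd (orbit ws2 (fst (orbit ws1 x u)) v) = w"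
    using assms(2) unfolding reach_def by blast
  show "\<exists>ws. set ws \<subseteq> Omega0 U \<and> snd (orbit ws x u) = w"
    using 1 2 by (intro exI[of _ "ws1 @ ws2"]) (simp add: orbit_append Let_def)
qed

lemma orbit_single: "snd (orbit [w] x v) = nrm (frechet_derivative (f_omega w) (at x) v)"
  by (simp add: nrm_def Let_def)

lemma stepA: assumes "U > 0" "a^2 + b^2 \<le> U^2" shows "reach U u (nrm (shA a b u))"
  unfolding reach_def
proof
  fix x :: "real^3"
  obtain A \<alpha> where A: "-U \<le> A" "A \<le> U" "0 \<le> \<alpha>" "\<alpha> < 2*pi" "A * cos (x$3 + \<alpha>) = a" "A * sin (x$3 + \<alpha>) = -b"
    using angle[of a "-b" U "x$3"] assms by auto
  have fw: "f_omega (A,0,0,\<alpha>,0,0) = fA A \<alpha>" by (simp add: f_omega_def fB0 fC0)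
  have mem: "(A,0,0,\<alpha>,0,0) \<in> Omega0 U" using A assms by (simp add: Omega0_def)
  have "frechet_derivative (f_omega (A,0,0,\<alpha>,0,0)) (at x) u = shA a b u"
    unfolding fw frechet_derivative_at[OF fA_deriv, symmetric]
    using A by (simp add: shA_def mult.assoc)
  then show "\<exists>ws. set ws \<subseteq> Omega0 U \<and> snd (orbit ws x u) = nrm (shA a b u)"
    using mem by (intro exI[of _ "[(A,0,0,\<alpha>,0,0)]"]) (simp only: orbit_single, simp)
qed

lemma stepB: assumes "U > 0" "a^2 + b^2 \<le> U^2" shows "reach U u (nrm (shB a b u))"
  unfolding reach_def
proof
  fix x :: "real^3"
  obtain B \<beta> where A: "-U \<le> B" "B \<le> U" "0 \<le> \<beta>" "\<beta> < 2*pi" "B * cos (x$1 + \<beta>) = a" "B * sin (x$1 + \<beta>) = -b"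
    using angle[of a "-b" U "x$1"] assms by auto
  have fw: "f_omega (0,B,0,0,\<beta>,0) = fB B \<beta>" by (simp add: f_omega_def fA0 fC0)
  have mem: "(0,B,0,0,\<beta>,0) \<in> Omega0 U" using A assms by (simp add: Omega0_def)
  have "frechet_derivative (f_omega (0,B,0,0,\<beta>,0)) (at x) u = shB a b u"
    unfolding fw frechet_derivative_at[OF fB_deriv, symmetric]
    using A by (simp add: shB_def mult.assoc)
  then show "\<exists>ws. set ws \<subseteq> Omega0 U \<and> snd (orbit ws x u) = nrm (shB a b u)"
    using mem by (intro exI[of _ "[(0,B,0,0,\<beta>,0)]"]) (simp only: orbit_single, simp)
qed

lemma stepC: assumes "U > 0" "a^2 + b^2 \<le> U^2" shows "reach U u (nrm (shC a b u))"
  unfolding reach_def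
proof
  fix x :: "real^3"
  obtain C \<gamma> where A: "-U \<le> C" "C \<le> U" "0 \<le> \<gamma>" "\<gamma> < 2*pi" "C * cos (x$2 + \<gamma>) = b" "C * sin (x$2 + \<gamma>) = -a"
    using angle[of b "-a" U "x$2"] assms by (auto simp: add.commute)
  have fw: "f_omega (0,0,C,0,0,\<gamma>) = fC C \<gamma>" by (simp add: f_omega_def fA0 fB0)
  have mem: "(0,0,C,0,0,\<gamma>) \<in> Omega0 U" using A assms by (simp add: Omega0_def)
  have "frechet_derivative (f_omega (0,0,C,0,0,\<gamma>)) (at x) u = shC a b u"
    unfolding fw frechet_derivative_at[OF fC_deriv, symmetric]
    using A by (simp add: shC_def mult.assoc)
  then show "\<exists>ws. set ws \<subseteq> Omega0 U \<and> snd (orbit ws x u) = nrm (shC a b u)"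
    using mem by (intro exI[of _ "[(0,0,C,0,0,\<gamma>)]"]) (simp only: orbit_single, simp)
qed

lemma nrm_scale: "c > 0 \<Longrightarrow> nrm (c *\<^sub>R y) = nrm y"
  by (auto simp: nrm_def)

lemma nrm_lin:
  assumes lin: "\<And>c u. S (c *\<^sub>R u) = c *\<^sub>R S u"
  shows "nrm (S (nrm w)) = nrm (S w)"
proof (cases "w = 0")
  case True
  then show ?thesis by (simp add: nrm_def)
next
  case False
  then show ?thesis unfolding nrm_def[of w] lin by (simp add: nrm_scale)
qed

lemma unbound:
  assumes U: "U > 0"
    and step: "\<And>a b u. a^2 + b^2 \<le> U^2 \<Longrightarrow> reach U u (nrm (S a b u))"
    and comp: "\<And>a b a' b' u. S a b (S a' b' u) = S (a+a') (b+b') u"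
    and lin: "\<And>a b c u. S a b (c *\<^sub>R u) = c *\<^sub>R S a b u"
  shows "reach U u (nrm (S a b u))"
proof -
  obtain n :: nat where n: "sqrt (a^2 + b^2) / U < real n" using reals_Archimedean2 by blast
  have npos: "real n > 0" using n U by (smt (verit, best) divide_nonneg_pos real_sqrt_ge_zero zero_le_power2)
  have "sqrt (a^2 + b^2) \<le> real n * U" using n U by (simp add: field_simps)
  then have "a^2 + b^2 \<le> (real n * U)^2"
    using npos U by (metis abs_of_pos mult_pos_pos real_sqrt_abs real_sqrt_le_iff)
  then have small: "(a / real n)^2 + (b / real n)^2 \<le> U^2" using npos
    by (simp add: power_divide add_divide_distrib[symmetric] divide_le_eq power_mult_distrib mult.commute)
  have it: "reach U u (nrm (S (real (Suc k) * (a / real n)) (real (Suc k) * (b / real n)) u))" for k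
  proof (induction k)
    case 0
    then show ?case using step[OF small] by simp
  next
    case (Suc k)
    let ?w = "S (real (Suc k) * (a / real n)) (real (Suc k) * (b / real n)) u"
    have "reach U (nrm ?w) (nrm (S (a / real n) (b / real n) (nrm ?w)))" using step[OF small] .
    also have "nrm (S (a / real n) (b / real n) (nrm ?w)) = nrm (S (a / real n) (b / real n) ?w)"
      by (rule nrm_lin) (rule lin)
    also have "\<dots> = nrm (S (real (Suc (Suc k)) * (a / real n)) (real (Suc (Suc k)) * (b / real n)) u)"
      unfolding comp by (rule arg_cong[where f = nrm], rule arg_cong2[where f = "\<lambda>p q. S p q u"]) (use npos in \<open>simp_all add: field_simps\<close>)
    finally show ?case using Suc reach_trans by blast
  qed
  obtain k where "n = Suc k" using npos by (cases n) auto
  then show ?thesis using it[of k] npos by simp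
qed

lemma shA_any: "U > 0 \<Longrightarrow> reach U u (nrm (shA a b u))"
  by (rule unbound[where S = shA]) (simp_all add: stepA, auto simp: shA_def vec3_eq vector_3 algebra_simps)
lemma shB_any: "U > 0 \<Longrightarrow> reach U u (nrm (shB a b u))"
  by (rule unbound[where S = shB]) (simp_all add: stepB, auto simp: shB_def vec3_eq vector_3 algebra_simps)
lemma shC_any: "U > 0 \<Longrightarrow> reach U u (nrm (shC a b u))"
  by (rule unbound[where S = shC]) (simp_all add: stepC, auto simp: shC_def vec3_eq vector_3 algebra_simps)

lemma reach_more:
  assumes "U > 0" "reach U u (nrm w)" "S = shA a b \<or> S = shB a b \<or> S = shC a b"
  shows "reach U u (nrm (S w))"
proof -
  have lin: "S (c *\<^sub>R y) = c *\<^sub>R S y" for c y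
    using assms(3) by (auto simp: shA_def shB_def shC_def vec3_eq vector_3 algebra_simps)
  have "reach U (nrm w) (nrm (S (nrm w)))"
    using assms(3) shA_any shB_any shC_any assms(1) by blast
  then show ?thesis using nrm_lin[of S, OF lin] reach_trans assms(2) by metis
qed

lemma norm3: "norm (u::real^3) = sqrt ((u$1)^2 + (u$2)^2 + (u$3)^2)"
  by (simp add: norm_vec_def L2_set_def sum_3)

lemma nrm_unit: "norm u = 1 \<Longrightarrow> nrm u = u" by (simp add: nrm_def)

lemma e1_norm: "norm (vector [1,0,0] :: real^3) = 1" by (simp add: norm3 vector_3)
lemma me1_norm: "norm (vector [-1,0,0] :: real^3) = 1" by (simp add: norm3 vector_3)

lemma reach_refl: "reach U u u"
  unfolding reach_def by (intro allI exI[of _ "[]"]) simp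

lemma flip1: assumes "U > 0" shows "reach U (vector [-1,0,0]) (vector [1,0,0])"
proof -
  let ?m = "vector [-1,0,0] :: real^3"
  have "reach U ?m (nrm ?m)" using nrm_unit[OF me1_norm] reach_refl by simp
  then have "reach U ?m (nrm (shB 1 0 (shC (-2) 0 (shB 1 0 ?m))))"
    using reach_more[OF assms] by blast
  moreover have "shB 1 0 (shC (-2) 0 (shB 1 0 ?m)) = vector [1,0,0]"
    by (simp add: shB_def shC_def vec3_eq vector_3)
  ultimately show ?thesis using nrm_unit[OF e1_norm] by simp
qed

lemma flip2: assumes "U > 0" shows "reach U (vector [1,0,0]) (vector [-1,0,0])"
proof -
  let ?m = "vector [1,0,0] :: real^3"
  have "reach U ?m (nrm ?m)" using nrm_unit[OF e1_norm] reach_refl by simp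
  then have "reach U ?m (nrm (shB 1 0 (shC (-2) 0 (shB 1 0 ?m))))"
    using reach_more[OF assms] by blast
  moreover have "shB 1 0 (shC (-2) 0 (shB 1 0 ?m)) = vector [-1,0,0]"
    by (simp add: shB_def shC_def vec3_eq vector_3)
  ultimately show ?thesis using nrm_unit[OF me1_norm] by simp
qed

lemma to_e1: assumes "U > 0" "u$1 \<noteq> 0" shows "reach U u (vector [1,0,0])"
proof -
  have r: "reach U u (nrm (shB (- u$2/u$1) (- u$3/u$1) u))" using shB_any[OF assms(1)] .
  have w: "shB (- u$2/u$1) (- u$3/u$1) u = (u$1) *\<^sub>R vector [1,0,0]"
    using assms(2) by (simp add: shB_def vec3_eq vector_3)
  show ?thesis
  proof (cases "u$1 > 0")
    case True
    then show ?thesis using r w nrm_scale[of "u$1"] nrm_unit[OF e1_norm] by simp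
  next
    case False
    then have neg: "- u$1 > 0" using assms(2) by simp
    have "(u$1) *\<^sub>R (vector [1,0,0] :: real^3) = (- u$1) *\<^sub>R vector [-1,0,0]"
      by (simp add: vec3_eq vector_3)
    then have "nrm (shB (- u$2/u$1) (- u$3/u$1) u) = vector [-1,0,0]"
      using w nrm_scale[OF neg] nrm_unit[OF me1_norm] by simp
    then show ?thesis using r flip1[OF assms(1)] reach_trans by metis
  qed
qed

lemma nrm_1: "u$1 \<noteq> 0 \<Longrightarrow> (nrm u)$1 \<noteq> 0"
  by (auto simp: nrm_def)

lemma part1: assumes "U > 0" "norm v = 1" shows "reach U v (vector [1,0,0])"
proof -
  have vv: "reach U v (nrm v)" using nrm_unit[OF assms(2)] reach_refl by simp
  consider "v$1 \<noteq> 0" | "v$1 = 0" "v$2 \<noteq> 0" | "v$1 = 0" "v$2 = 0" "v$3 \<noteq> 0"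
    using assms(2) by (fastforce simp: norm3)
  then show ?thesis
  proof cases
    case 1 then show ?thesis using to_e1 assms by blast
  next
    case 2
    have "reach U v (nrm (shC 1 0 v))" using reach_more[OF assms(1) vv] by blast
    moreover have "(nrm (shC 1 0 v))$1 \<noteq> 0" using 2 by (intro nrm_1) (simp add: shC_def vector_3)
    ultimately show ?thesis using to_e1[OF assms(1)] reach_trans by blast
  next
    case 3
    have "reach U v (nrm (shA 1 0 v))" using reach_more[OF assms(1) vv] by blast
    moreover have "(nrm (shA 1 0 v))$1 \<noteq> 0" using 3 by (intro nrm_1) (simp add: shA_def vector_3)
    ultimately show ?thesis using to_e1[OF assms(1)] reach_trans by blast
  qed
qed

lemma part2: assumes "U > 0" "norm vb = 1" shows "reach U (vector [1,0,0]) vb"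
proof -
  let ?e = "vector [1,0,0] :: real^3"
  have ee: "reach U ?e (nrm ?e)" using nrm_unit[OF e1_norm] reach_refl by simp
  have vbn: "nrm vb = vb" using nrm_unit[OF assms(2)] .
  consider "vb$1 > 0" | "vb$1 < 0" | "vb$1 = 0" "vb$2 \<noteq> 0" | "vb$1 = 0" "vb$2 = 0" "vb$3 \<noteq> 0"
    using assms(2) by (fastforce simp: norm3)
  then show ?thesis
  proof cases
    case 1
    have "reach U ?e (nrm (shB (vb$2/vb$1) (vb$3/vb$1) ?e))" using reach_more[OF assms(1) ee] by blast
    moreover have "shB (vb$2/vb$1) (vb$3/vb$1) ?e = (1 / vb$1) *\<^sub>R vb"
      using 1 by (simp add: shB_def vec3_eq vector_3)
    ultimately show ?thesis using nrm_scale[of "1 / vb$1" vb] 1 vbn by simp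
  next
    case 2
    let ?m = "vector [-1,0,0] :: real^3"
    have mm: "reach U ?m (nrm ?m)" using nrm_unit[OF me1_norm] reach_refl by simp
    have "reach U ?m (nrm (shB (vb$2/vb$1) (vb$3/vb$1) ?m))" using reach_more[OF assms(1) mm] by blast
    moreover have "shB (vb$2/vb$1) (vb$3/vb$1) ?m = (- 1 / vb$1) *\<^sub>R vb"
      using 2 by (simp add: shB_def vec3_eq vector_3)
    ultimately have "reach U ?m vb" using nrm_scale[of "- 1 / vb$1" vb] 2 vbn by simp
    then show ?thesis using flip2[OF assms(1)] reach_trans by blast
  next
    case 3
    have "reach U ?e (nrm (shC (-1 / vb$2) 0 (shB (vb$2) (vb$3) ?e)))"
      using reach_more[OF assms(1)] ee by blast
    moreover have "shC (-1 / vb$2) 0 (shB (vb$2) (vb$3) ?e) = vb"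
      using 3 by (simp add: shB_def shC_def vec3_eq vector_3)
    ultimately show ?thesis using vbn by simp
  next
    case 4
    have "reach U ?e (nrm (shA (-1 / vb$3) 0 (shB (vb$2) (vb$3) ?e)))"
      using reach_more[OF assms(1)] ee by blast
    moreover have "shA (-1 / vb$3) 0 (shB (vb$2) (vb$3) ?e) = vb"
      using 4 by (simp add: shA_def shB_def vec3_eq vector_3)
    ultimately show ?thesis using vbn by simp
  qed
qed

theorem lemma3p3:
  fixes U :: real and x v :: "real^3"
  assumes "U > 0" and "v \<in> sphere 0 1"
  shows "(\<exists>ws. set ws \<subseteq> Omega0 U \<and> snd (orbit ws x v) = vector [1, 0, 0])
       \<and> (v = vector [1, 0, 0] \<longrightarrow>
            (\<forall>vb \<in> sphere 0 1. \<exists>ws. set ws \<subseteq> Omega0 U \<and> snd (orbit ws x v) = vb))"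
  using part1[OF assms(1), of v] part2[OF assms(1)] assms(2) unfolding reach_def by auto

end
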